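(* Let $G=(V,E)$ be a finite simple graph and let $x$ be a maximum cost construction sequence for $G$ (i.e. $\nu(x)=\nu^*(G)$). If $(v_1,\dots,v_n)$ is the order in which the vertices of $G$ appear in $x$, then $\deg(v_i)\ge\deg(v_{i+1})$ for all $1\le i<n$.
   Context: For a finite simple graph $G=(V,E)$ with $\ell=|V|+|E|$, a construction sequence (c-sequence) is a bijection $x:\{1,\dots,\ell\}\to V\sqcup E$ such that every edge $e=uw$ satisfies $x^{-1}(e)>\max\{x^{-1}(u),x^{-1}(w)\}$. The cost of $x$ is $\nu(x)=\sum_{e=uw\in E}\big(2x^{-1}(e)-x^{-1}(u)-x^{-1}(w)\big)$, and $\nu^*(G)$ is the maximum of $\nu(x)$ over all c-sequences for $G$. *)

theory Defs
  imports Main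
begin

definition simple_graph :: "'a set \<Rightarrow> 'a set set \<Rightarrow> bool" where
  "simple_graph V E \<longleftrightarrow> finite V \<and> (\<forall>e\<in>E. e \<subseteq> V \<and> card e = 2)"

definition degree :: "'a set set \<Rightarrow> 'a \<Rightarrow> nat" where
  "degree E v = card {e\<in>E. v \<in> e}"

(* A c-sequence x : {1..l} -> V \<sqcup> E is represented by its inverse
   pos = x^{-1} : V \<sqcup> E -> {1..l}, a bijection. *)
definition c_sequence :: "'a set \<Rightarrow> 'a set set \<Rightarrow> ('a + 'a set \<Rightarrow> nat) \<Rightarrow> bool" where
  "c_sequence V E pos \<longleftrightarrow>
     bij_betw pos (V <+> E) {1..card V + card E} \<and>
     (\<forall>e\<in>E. \<forall>u\<in>e. pos (Inl u) < pos (Inr e))"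

definition cost :: "'a set set \<Rightarrow> ('a + 'a set \<Rightarrow> nat) \<Rightarrow> int" where
  "cost E pos = (\<Sum>e\<in>E. 2 * int (pos (Inr e)) - (\<Sum>u\<in>e. int (pos (Inl u))))"

definition max_cost :: "'a set \<Rightarrow> 'a set set \<Rightarrow> int" where
  "max_cost V E = Max {cost E pos | pos. c_sequence V E pos}"

end

theory Submission
  imports Defs
begin

lemma cost_le_max:
  assumes sg: "simple_graph V E" and cs: "c_sequence V E f"
  shows "cost E f \<le> max_cost V E"
proof -
  define N where "N = card V + card E"
  define M where "M = int (card E) * (2 * int N)"
  have finE: "finite E" using sg unfolding simple_graph_def
    by (meson Pow_iff finite_Pow_iff finite_subset subsetI)
  have bnd: "cost E g \<in> {-M..M}" if "c_sequence V E g" for g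
  proof -
    have bij: "bij_betw g (V <+> E) {1..N}" using that unfolding c_sequence_def N_def by simp
    have bv: "g (Inl x) \<le> N" if "x \<in> V" for x
      using bij_betw_apply[OF bij, of "Inl x"] that by auto
    have be: "g (Inr e) \<le> N" if "e \<in> E" for e
      using bij_betw_apply[OF bij, of "Inr e"] that by auto
    have t: "\<bar>2 * int (g (Inr e)) - (\<Sum>x\<in>e. int (g (Inl x)))\<bar> \<le> 2 * int N" if e: "e \<in> E" for e
    proof -
      have sub: "e \<subseteq> V" and c2: "card e = 2" using sg e unfolding simple_graph_def by auto
      have "(\<Sum>x\<in>e. int (g (Inl x))) \<le> of_nat (card e) * int N"
        by (rule sum_bounded_above) (use bv sub in auto)
      moreover have "(\<Sum>x\<in>e. int (g (Inl x))) \<ge> 0" by (simp add: sum_nonneg)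
      moreover have "int (g (Inr e)) \<le> int N" using be e by simp
      ultimately show ?thesis using c2 by auto
    qed
    have "cost E g \<le> of_nat (card E) * (2 * int N)" unfolding cost_def
      by (rule sum_bounded_above) (use t in fastforce)
    moreover have "of_nat (card E) * (- (2 * int N)) \<le> cost E g" unfolding cost_def
      by (rule sum_bounded_below) (use t in fastforce)
    ultimately show ?thesis unfolding M_def by auto
  qed
  have fin: "finite {cost E pos | pos. c_sequence V E pos}"
    by (rule finite_subset[of _ "{-M..M}"]) (use bnd in auto)
  show ?thesis unfolding max_cost_def
    by (rule Max_ge[OF fin]) (use cs in auto)
qed

theorem lemma3:
  fixes V :: "'a set" and E :: "'a set set" and pos :: "'a + 'a set \<Rightarrow> nat"
  assumes "simple_graph V E"
    and "c_sequence V E pos"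
    and "cost E pos = max_cost V E"
    and "u \<in> V" and "w \<in> V"
    and "pos (Inl u) < pos (Inl w)"
    and "\<not> (\<exists>z\<in>V. pos (Inl u) < pos (Inl z) \<and> pos (Inl z) < pos (Inl w))"
  shows "degree E u \<ge> degree E w"
proof (rule ccontr)
  assume dlt: "\<not> degree E u \<ge> degree E w"
  note sg = assms(1) and cs = assms(2) and uV = assms(4) and wV = assms(5)
  define p where "p = pos (Inl u)"
  define q where "q = pos (Inl w)"
  have pq: "p < q" using assms(6) p_def q_def by simp
  define N where "N = card V + card E"
  have bij: "bij_betw pos (V <+> E) {1..N}" using cs unfolding c_sequence_def N_def by simp
  have edg: "\<forall>e\<in>E. \<forall>z\<in>e. pos (Inl z) < pos (Inr e)" using cs unfolding c_sequence_def by simp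
  have inj: "inj_on pos (V <+> E)" using bij bij_betw_imp_inj_on by blast
  have finE: "finite E" using sg unfolding simple_graph_def
    by (meson Pow_iff finite_Pow_iff finite_subset subsetI)
  have p1: "1 \<le> p" using bij_betw_apply[OF bij, of "Inl u"] uV p_def by auto
  have qN: "q \<le> N" using bij_betw_apply[OF bij, of "Inl w"] wV q_def by auto
  define \<tau> where "\<tau> = (\<lambda>i::nat. if i = q then p else if p \<le> i \<and> i < q then i + 1 else i)"
  define pos' where "pos' = \<tau> \<circ> pos"
  have tinj: "inj_on \<tau> {1..N}" unfolding inj_on_def \<tau>_def using pq by auto
  have timg: "\<tau> ` {1..N} \<subseteq> {1..N}" unfolding \<tau>_def using pq p1 qN by auto
  have tbij: "bij_betw \<tau> {1..N} {1..N}"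
    unfolding bij_betw_def using tinj endo_inj_surj[OF _ timg tinj] by simp
  have bij': "bij_betw pos' (V <+> E) {1..N}"
    unfolding pos'_def using bij_betw_trans[OF bij tbij] .
  have tmono: "\<tau> i < \<tau> j" if "i < j" "j \<noteq> q" for i j
    using that pq unfolding \<tau>_def by auto
  have eq_ne: "pos (Inr e) \<noteq> q" if "e \<in> E" for e
  proof
    assume "pos (Inr e) = q"
    hence "pos (Inr e) = pos (Inl w)" using q_def by simp
    hence "Inr e = (Inl w :: 'a + 'a set)" using inj that wV by (auto dest: inj_onD)
    thus False by simp
  qed
  have ep_ne: "pos (Inr e) \<noteq> p" if "e \<in> E" for e
  proof
    assume "pos (Inr e) = p"
    hence "pos (Inr e) = pos (Inl u)" using p_def by simp
    hence "Inr e = (Inl u :: 'a + 'a set)" using inj that uV by (auto dest: inj_onD)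
    thus False by simp
  qed
  have cs': "c_sequence V E pos'"
    unfolding c_sequence_def
  proof (intro conjI ballI)
    show "bij_betw pos' (V <+> E) {1..card V + card E}" using bij' N_def by simp
    fix e z assume e: "e \<in> E" and z: "z \<in> e"
    show "pos' (Inl z) < pos' (Inr e)" unfolding pos'_def comp_def
      by (rule tmono) (use edg e z eq_ne in auto)
  qed
  have vx: "int (pos' (Inl x)) = int (pos (Inl x)) + (if x = u then 1 else 0) - (if x = w then int (q - p) else 0)"
    if x: "x \<in> V" for x
  proof (cases "x = u")
    case True then show ?thesis using pq unfolding pos'_def \<tau>_def p_def q_def by auto
  next
    case xu: False
    show ?thesis
    proof (cases "x = w")
      case True then show ?thesis using pq xu unfolding pos'_def \<tau>_def p_def q_def by auto
    next
      case xw: False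
      have n1: "pos (Inl x) \<noteq> p"
      proof
        assume "pos (Inl x) = p"
        hence "Inl x = (Inl u :: 'a + 'a set)" using inj x uV p_def by (auto dest: inj_onD)
        thus False using xu by simp
      qed
      have n2: "pos (Inl x) \<noteq> q"
      proof
        assume "pos (Inl x) = q"
        hence "Inl x = (Inl w :: 'a + 'a set)" using inj x wV q_def by (auto dest: inj_onD)
        thus False using xw by simp
      qed
      have n3: "\<not> (p < pos (Inl x) \<and> pos (Inl x) < q)" using assms(7) x p_def q_def by auto
      show ?thesis using xu xw n1 n2 n3 unfolding pos'_def \<tau>_def by auto
    qed
  qed
  define seg where "seg e = (if p < pos (Inr e) \<and> pos (Inr e) < q then (1::int) else 0)" for e
  have ex: "int (pos' (Inr e)) = int (pos (Inr e)) + seg e" if e: "e \<in> E" for e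
    using eq_ne[OF e] ep_ne[OF e] unfolding pos'_def \<tau>_def seg_def by auto
  have tm: "2 * int (pos' (Inr e)) - (\<Sum>x\<in>e. int (pos' (Inl x)))
      = (2 * int (pos (Inr e)) - (\<Sum>x\<in>e. int (pos (Inl x))))
        + (2 * seg e - (if u \<in> e then 1 else 0) + (if w \<in> e then int (q - p) else 0))"
    if e: "e \<in> E" for e
  proof -
    have sub: "e \<subseteq> V" and fe: "finite e" using sg e unfolding simple_graph_def
      by (auto intro: card_ge_0_finite)
    have "(\<Sum>x\<in>e. int (pos' (Inl x))) = (\<Sum>x\<in>e. int (pos (Inl x)) + (if x = u then 1 else 0) - (if x = w then int (q - p) else 0))"
      by (rule sum.cong[OF refl], rule vx) (use sub in auto)
    also have "\<dots> = (\<Sum>x\<in>e. int (pos (Inl x))) + (\<Sum>x\<in>e. (if x = u then 1 else 0)) - (\<Sum>x\<in>e. (if x = w then int (q - p) else 0))"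
      by (simp add: sum.distrib sum_subtractf)
    also have "\<dots> = (\<Sum>x\<in>e. int (pos (Inl x))) + (if u \<in> e then 1 else 0) - (if w \<in> e then int (q - p) else 0)"
      using fe by (simp add: sum.delta')
    finally show ?thesis using ex[OF e] by simp
  qed
  have "cost E pos' = cost E pos + (\<Sum>e\<in>E. 2 * seg e - (if u \<in> e then 1 else 0) + (if w \<in> e then int (q - p) else 0))"
    unfolding cost_def by (simp add: tm sum.distrib cong: sum.cong)
  also have "(\<Sum>e\<in>E. 2 * seg e - (if u \<in> e then 1 else 0) + (if w \<in> e then int (q - p) else 0))
     = 2 * (\<Sum>e\<in>E. seg e) - (\<Sum>e\<in>E. (if u \<in> e then 1 else 0)) + (\<Sum>e\<in>E. (if w \<in> e then int (q - p) else 0))"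
    by (simp add: sum.distrib sum_subtractf sum_distrib_left)
  also have "(\<Sum>e\<in>E. (if u \<in> e then 1 else 0)) = int (degree E u)"
    unfolding degree_def using finE by (simp add: sum.If_cases Int_def)
  also have "(\<Sum>e\<in>E. (if w \<in> e then int (q - p) else 0)) = int (q - p) * int (degree E w)"
    unfolding degree_def using finE by (simp add: sum.If_cases Int_def)
  finally have cc: "cost E pos' = cost E pos + 2 * (\<Sum>e\<in>E. seg e) - int (degree E u) + int (q - p) * int (degree E w)"
    by simp
  have "(\<Sum>e\<in>E. seg e) \<ge> 0" by (rule sum_nonneg) (simp add: seg_def)
  moreover have "int (q - p) * int (degree E w) \<ge> int (degree E w)" using pq mult_right_mono[of 1 "int (q - p)" "int (degree E w)"] by simp
  ultimately have "cost E pos' > cost E pos" using cc dlt by linarith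
  moreover have "cost E pos' \<le> max_cost V E" by (rule cost_le_max[OF sg cs'])
  ultimately show False using assms(3) by simp
qed

end
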